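(* Let $\mathcal{X} \subseteq \mathbb{R}^d$ and $\mathcal{Y} = \{1,\dots,c\}$. Let $\hat{p}^r(\bm{x},\hat{y})$ be a (real) joint distribution of data and clean labels, and let the observed noisy labels arise by class-dependent corruption independent of $\bm{x}$: with transition matrix $T=(T_{i,j}) \in [0,1]^{c\times c}$, $T_{i,j} = p(\tilde{y}=j \mid \hat{y}=i)$, the real noisy joint distribution is $\tilde{p}^r(\bm{x},\tilde{y}) = \sum_{\hat{y}} T_{\hat{y},\tilde{y}}\, \hat{p}^r(\bm{x},\hat{y})$. Let $G$ be a conditional generator mapping $(\bm{z},\hat{y}^g)$, with $\bm{z}\sim p(\bm{z})$ and $\hat{y}^g \sim p(\hat{y})$, to $G(\bm{z},\hat{y}^g)$; let $\hat{p}^g(\bm{x},\hat{y})$ be the joint distribution of $(G(\bm{z},\hat{y}^g),\hat{y}^g)$, and let $\tilde{p}^g(\bm{x},\tilde{y}) = \sum_{\hat{y}} T_{\hat{y},\tilde{y}}\, \hat{p}^g(\bm{x},\hat{y})$ be the joint distribution of $(G(\bm{z},\hat{y}^g),\tilde{y}^g)$ where $\tilde{y}^g \sim p(\tilde{y}\mid \hat{y}^g)$. Consider the objective $$\mathcal{L}_{\mathrm{rcGAN}}(G,D) = \mathbb{E}_{(\bm{x}^r,\tilde{y}^r)\sim \tilde{p}^r}[\log D(\bm{x}^r,\tilde{y}^r)] + \mathbb{E}_{\bm{z}\sim p(\bm{z}),\,\hat{y}^g\sim p(\hat{y}),\,\tilde{y}^g\sim p(\tilde{y}\mid\hat{y}^g)}[\log(1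 - D(G(\bm{z},\hat{y}^g),\tilde{y}^g))],$$ where the discriminator $D:\mathcal{X}\times\mathcal{Y}\to(0,1)$ maximizes and the generator $G$ minimizes, and call $G$ optimal if it attains the global minimum over generators of $\max_D \mathcal{L}_{\mathrm{rcGAN}}(G,D)$. If $T$ is nonsingular, then $G$ is optimal if and only if $\hat{p}^g(\bm{x},\hat{y}) = \hat{p}^r(\bm{x},\hat{y})$.
   Context: This is the setting of a label-noise robust conditional GAN (rcGAN): only noisy labels $\tilde{y}$ are observed for real data, the clean label $\hat{y}$ is unobserved, and the generator is conditioned on a clean label $\hat{y}^g$ which is passed through the known noise transition model $p(\tilde{y}\mid\hat{y})$ before being given to the discriminator. Optimality is understood in the sense of the original GAN analysis (optimal discriminator for fixed generator, then minimization over generators). *)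

theory Defs
  imports "HOL-Analysis.Analysis" "HOL-Probability.Probability"
begin

(* Data space X \<subseteq> R^d (as a measurable subspace of Borel R^d), label space Y = the
   finite type 'c (so c = CARD('c)).  Joint distributions live on X \<times> Y. *)
definition joint_space :: "(real^'d) set \<Rightarrow> ((real^'d) \<times> 'c) measure" where
  "joint_space X = restrict_space borel X \<Otimes>\<^sub>M count_space UNIV"

definition joint_dists :: "(real^'d) set \<Rightarrow> ((real^'d) \<times> 'c) measure set" where
  "joint_dists X = {Q. prob_space Q \<and> sets Q = sets (joint_space X)}"

definition discs :: "(real^'d) set \<Rightarrow> ((real^'d) \<times> 'c \<Rightarrow> real) set" where
  "discs X = {D. D \<in> borel_measurable (joint_space X) \<and>
                 (\<forall>w\<in>space (joint_space X). 0 < D w \<and> D w < 1)}"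

(* E_{(x,\<tilde>y) ~ \<tilde>p^r}[log D(x,\<tilde>y)], where \<tilde>p^r(x,\<tilde>y) = \<Sum>_\<hat>y T_{\<hat>y,\<tilde>y} \<hat>p^r(x,\<hat>y).
   The integrand is nonpositive, so the expectation is taken in [-\<infinity>,0]. *)
definition real_term :: "real^'c^'c \<Rightarrow> ((real^'d) \<times> 'c) measure \<Rightarrow> ((real^'d) \<times> 'c \<Rightarrow> real) \<Rightarrow> ereal" where
  "real_term T P D =
     - enn2ereal (\<integral>\<^sup>+ w. ennreal (- (\<Sum>j\<in>UNIV. T $ snd w $ j * ln (D (fst w, j)))) \<partial>P)"

definition fake_term_gen :: "real^'c^'c \<Rightarrow> 'z measure \<Rightarrow> 'c pmf \<Rightarrow> ('z \<Rightarrow> 'c \<Rightarrow> real^'d)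
     \<Rightarrow> ((real^'d) \<times> 'c \<Rightarrow> real) \<Rightarrow> ereal" where
  "fake_term_gen T Z py G D =
     - enn2ereal (\<integral>\<^sup>+ u. ennreal (- (\<Sum>j\<in>UNIV. T $ snd u $ j * ln (1 - D (G (fst u) (snd u), j))))
                    \<partial>(Z \<Otimes>\<^sub>M measure_pmf py))"

definition L_rcGAN :: "real^'c^'c \<Rightarrow> ((real^'d) \<times> 'c) measure \<Rightarrow> 'z measure \<Rightarrow> 'c pmf
     \<Rightarrow> ('z \<Rightarrow> 'c \<Rightarrow> real^'d) \<Rightarrow> ((real^'d) \<times> 'c \<Rightarrow> real) \<Rightarrow> ereal" where
  "L_rcGAN T P Z py G D = real_term T P D + fake_term_gen T Z py G D"

(* same objective, with the generated clean joint distribution \<hat>p^g given directly as Q *)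
definition fake_term_dist :: "real^'c^'c \<Rightarrow> ((real^'d) \<times> 'c) measure \<Rightarrow> ((real^'d) \<times> 'c \<Rightarrow> real) \<Rightarrow> ereal" where
  "fake_term_dist T Q D =
     - enn2ereal (\<integral>\<^sup>+ w. ennreal (- (\<Sum>j\<in>UNIV. T $ snd w $ j * ln (1 - D (fst w, j)))) \<partial>Q)"

definition L_dist :: "real^'c^'c \<Rightarrow> ((real^'d) \<times> 'c) measure \<Rightarrow> ((real^'d) \<times> 'c) measure
     \<Rightarrow> ((real^'d) \<times> 'c \<Rightarrow> real) \<Rightarrow> ereal" where
  "L_dist T P Q D = real_term T P D + fake_term_dist T Q D"

definition gen_dist :: "(real^'d) set \<Rightarrow> 'z measure \<Rightarrow> 'c pmf \<Rightarrow> ('z \<Rightarrow> 'c \<Rightarrow> real^'d)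
     \<Rightarrow> ((real^'d) \<times> 'c) measure" where
  "gen_dist X Z py G = distr (Z \<Otimes>\<^sub>M measure_pmf py) (joint_space X) (\<lambda>(z, y). (G z y, y))"

definition gen_value where
  "gen_value X T P Z py G = (SUP D\<in>discs X. L_rcGAN T P Z py G D)"

definition dist_value where
  "dist_value X T P Q = (SUP D\<in>discs X. L_dist T P Q D)"

(* G attains the global minimum of max_D L_rcGAN, the minimum being taken (as in the
   nonparametric GAN analysis) over all generated joint distributions on X \<times> Y. *)
definition rcgan_optimal where
  "rcgan_optimal X T P Z py G \<longleftrightarrow> (\<forall>Q\<in>joint_dists X. gen_value X T P Z py G \<le> dist_value X T P Q)"

end

theory Submission
  imports Defs
begin


lemma inv_vec:
  fixes T :: "real^'c^'c"
  assumes "invertible T" "v v* T = w v* T"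
  shows "v = w"
proof -
  obtain A' where A': "T ** A' = mat 1" using assms(1) unfolding invertible_def by blast
  have "v = (v v* T) v* A'" by (simp add: vector_matrix_mul_assoc A')
  also have "\<dots> = (w v* T) v* A'" using assms(2) by simp
  also have "\<dots> = w" by (simp add: vector_matrix_mul_assoc A')
  finally show ?thesis .
qed

lemma slice_meas:
  assumes "D \<in> borel_measurable (joint_space X)"
  shows "(\<lambda>w. D (fst w, j)) \<in> borel_measurable (joint_space X)"
proof -
  have "(\<lambda>w. (fst w, j)) \<in> joint_space X \<rightarrow>\<^sub>M joint_space X"
    unfolding joint_space_def by measurable
  from measurable_compose[OF this assms] show ?thesis by simp
qed

lemma T_meas:
  fixes T :: "real^'c^'c" shows "(\<lambda>w. T $ snd w $ j) \<in> borel_measurable (joint_space X)"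
proof -
  have "snd \<in> joint_space X \<rightarrow>\<^sub>M count_space UNIV"
    unfolding joint_space_def by measurable
  moreover have "(\<lambda>y. T $ y $ j) \<in> count_space UNIV \<rightarrow>\<^sub>M (borel::real measure)" by simp
  ultimately show ?thesis by (rule measurable_compose[where f=snd and g="\<lambda>y. T $ y $ j"])
qed

lemma integrand_meas:
  fixes T :: "real^'c^'c"
  assumes "D \<in> borel_measurable (joint_space X)" "sets M = sets (joint_space X)"
    and f: "f \<in> borel_measurable borel"
  shows "(\<lambda>w. ennreal (- (\<Sum>j\<in>UNIV. T $ snd w $ j * f (D (fst w, j))))) \<in> borel_measurable M"
proof -
  have m1: "(\<lambda>w. f (D (fst w, j))) \<in> borel_measurable (joint_space X)" for j
    using measurable_compose[OF slice_meas[OF assms(1), of j] f] by simp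
  have "(\<lambda>w. ennreal (- (\<Sum>j\<in>UNIV. T $ snd w $ j * f (D (fst w, j))))) \<in> borel_measurable (joint_space X)"
    using T_meas m1 by measurable
  then show ?thesis by (subst measurable_cong_sets[OF assms(2) refl])
qed

lemma ln_prod_bound:
  fixes d :: real assumes "0 < d" "d < 1"
  shows "ln d + ln (1 - d) \<le> - (2 * ln 2)"
proof -
  have h: "d * (1 - d) = 1/4 - (d - 1/2)^2" by (simp add: power2_eq_square algebra_simps)
  have "d * (1 - d) \<le> 1/4" unfolding h using zero_le_power2[of "d - 1/2"] by linarith
  hence "ln (d * (1 - d)) \<le> ln (1/4)" using assms by (intro ln_mono) auto
  moreover have "ln (1/4::real) = - (2 * ln 2)"
    using ln_mult[of 2 2] by (simp add: ln_div)
  ultimately show ?thesis using assms by (simp add: ln_mult)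
qed

lemma ereal_neg_add:
  fixes a b :: ereal assumes "0 \<le> a" "0 \<le> b"
  shows "- a + - b = - (a + b)"
  using assms by (cases a; cases b) auto

lemma L_upper:
  fixes T :: "real^'c^'c" and P :: "((real^'d) \<times> 'c) measure"
  assumes P: "prob_space P" "sets P = sets (joint_space X)"
    and T: "\<forall>i j. 0 \<le> T $ i $ j \<and> T $ i $ j \<le> 1" "\<forall>i. (\<Sum>j\<in>UNIV. T $ i $ j) = 1"
    and D: "D \<in> discs X"
  shows "L_dist T P P D \<le> ereal (- (2 * ln 2))"
proof -
  define a where "a = (\<lambda>w. ennreal (- (\<Sum>j\<in>UNIV. T $ snd w $ j * ln (D (fst w, j)))))"
  define b where "b = (\<lambda>w. ennreal (- (\<Sum>j\<in>UNIV. T $ snd w $ j * (\<lambda>d. ln (1 - d)) (D (fst w, j)))))"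
  have Dm: "D \<in> borel_measurable (joint_space X)" and Dr: "\<And>w. w \<in> space (joint_space X) \<Longrightarrow> 0 < D w \<and> D w < 1"
    using D unfolding discs_def by auto
  have am: "a \<in> borel_measurable P" unfolding a_def
    by (rule integrand_meas[OF Dm P(2)]) measurable
  have bm: "b \<in> borel_measurable P" unfolding b_def
    by (rule integrand_meas[OF Dm P(2), of "\<lambda>d. ln (1 - d)"]) measurable
  have sp: "space P = X \<times> UNIV"
    using sets_eq_imp_space_eq[OF P(2)] unfolding joint_space_def by (simp add: space_pair_measure space_restrict_space)
  have pw: "ennreal (2 * ln 2) \<le> a w + b w" if w: "w \<in> space P" for w
  proof -
    have inX: "(fst w, j) \<in> space (joint_space X)" for j
      using w sp unfolding joint_space_def by (auto simp: space_pair_measure space_restrict_space)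
    have r: "0 < D (fst w, j) \<and> D (fst w, j) < 1" for j using Dr[OF inX] .
    have r': "D (fst w, j) \<le> 1" "0 \<le> D (fst w, j)" for j using r[of j] by auto
    have A0: "0 \<le> - (\<Sum>j\<in>UNIV. T $ snd w $ j * ln (D (fst w, j)))"
      using r r' T(1) by (auto intro!: sum_nonpos mult_nonneg_nonpos)
    have B0: "0 \<le> - (\<Sum>j\<in>UNIV. T $ snd w $ j * ln (1 - D (fst w, j)))"
      using r r' T(1) by (auto intro!: sum_nonpos mult_nonneg_nonpos)
    have "2 * ln 2 = (\<Sum>j\<in>UNIV. T $ snd w $ j * (2 * ln 2))"
      using T(2) by (simp add: sum_distrib_right[symmetric])
    also have "\<dots> \<le> (\<Sum>j\<in>UNIV. T $ snd w $ j * (- ln (D (fst w, j)) - ln (1 - D (fst w, j))))"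
    proof (intro sum_mono mult_left_mono)
      fix j show "2 * ln 2 \<le> - ln (D (fst w, j)) - ln (1 - D (fst w, j))"
        using ln_prod_bound[of "D (fst w, j)"] r[of j] by linarith
    qed (use T(1) in auto)
    also have "\<dots> = - (\<Sum>j\<in>UNIV. T $ snd w $ j * ln (D (fst w, j))) + - (\<Sum>j\<in>UNIV. T $ snd w $ j * ln (1 - D (fst w, j)))"
      by (simp add: sum_negf[symmetric] sum.distrib[symmetric] algebra_simps)
    finally show ?thesis unfolding a_def b_def using A0 B0
      by (simp add: ennreal_plus[symmetric] del: ennreal_plus)
  qed
  have "ennreal (2 * ln 2) = (\<integral>\<^sup>+ w. ennreal (2 * ln 2) \<partial>P)"
    using prob_space.emeasure_space_1[OF P(1)] by simp
  also have "\<dots> \<le> (\<integral>\<^sup>+ w. a w + b w \<partial>P)" using pw by (intro nn_integral_mono) auto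
  also have "\<dots> = integral\<^sup>N P a + integral\<^sup>N P b" by (rule nn_integral_add[OF am bm])
  finally have le: "ennreal (2 * ln 2) \<le> integral\<^sup>N P a + integral\<^sup>N P b" .
  have "L_dist T P P D = - enn2ereal (integral\<^sup>N P a) + - enn2ereal (integral\<^sup>N P b)"
    unfolding L_dist_def real_term_def fake_term_dist_def a_def b_def by simp
  also have "\<dots> = - enn2ereal (integral\<^sup>N P a + integral\<^sup>N P b)"
    by (simp add: ereal_neg_add plus_ennreal.rep_eq)
  also have "\<dots> \<le> ereal (- (2 * ln 2))"
  proof -
    have "ereal (2 * ln 2) \<le> enn2ereal (integral\<^sup>N P a + integral\<^sup>N P b)"
      using le by (simp add: less_eq_ennreal.rep_eq)
    then show ?thesis by (metis ereal_minus_le_minus uminus_ereal.simps(1))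
  qed
  finally show ?thesis .
qed



lemma half_disc: "(\<lambda>_. 1/2) \<in> discs X"
  by (simp add: discs_def)

lemma L_half:
  fixes T :: "real^'c^'c" and P Q :: "((real^'d) \<times> 'c) measure"
  assumes "prob_space P" "prob_space Q" and T2: "\<forall>i. (\<Sum>j\<in>UNIV. T $ i $ j) = 1"
  shows "L_dist T P Q (\<lambda>_. 1/2) = ereal (- (2 * ln 2))"
proof -
  have s: "- (\<Sum>j\<in>UNIV. T $ i $ j * ln (1/2)) = ln 2" for i
    using T2 by (simp add: ln_div sum_negf sum_distrib_right[symmetric])
  have s2: "- (\<Sum>j\<in>UNIV. T $ i $ j * ln (1 - 1/2)) = ln 2" for i
    using s[of i] by simp
  show ?thesis
    unfolding L_dist_def real_term_def fake_term_dist_def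
    using prob_space.emeasure_space_1[OF assms(1)] prob_space.emeasure_space_1[OF assms(2)]
    by (simp add: s s2 del: ln_div)
qed

lemma sets_B:
  assumes "B \<in> sets (restrict_space borel X)"
  shows "B \<times> {y} \<in> sets (joint_space X)"
  using assms unfolding joint_space_def by (intro pair_measureI) auto



lemma term_A:
  fixes T :: "real^'c^'c" and M :: "((real^'d) \<times> 'c) measure"
  assumes M: "prob_space M" "sets M = sets (joint_space X)"
    and T: "\<forall>i j. 0 \<le> T $ i $ j \<and> T $ i $ j \<le> 1" "\<forall>i. (\<Sum>j\<in>UNIV. T $ i $ j) = 1"
    and B: "B \<in> sets (restrict_space borel X)" and s: "-1 < s" "s < 1"
  shows "enn2ereal (\<integral>\<^sup>+ w. ennreal (- (\<Sum>i\<in>UNIV. T $ snd w $ i * ln ((1 + s * indicator (B \<times> {j}) (fst w, i)) / 2))) \<partial>M)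
     = ereal (ln 2 - ln (1 + s) * (\<Sum>y\<in>UNIV. T $ y $ j * measure M (B \<times> {y})))"
proof -
  define c where "c = ln (1 + s)"
  have c: "c \<le> ln 2" unfolding c_def using s by simp
  have l: "ln ((1 + s * indicator (B \<times> {j}) (x, i)) / 2) = (if i = j then c * indicator B x else 0) - ln 2" for x i
    using s by (auto simp: indicator_def c_def ln_div)
  have d1: "(\<Sum>i\<in>UNIV. T $ y $ i * (if i = j then a else 0)) = T $ y $ j * a" for y and a :: real
    by (simp add: if_distrib cong: if_cong)
  have d2: "(\<Sum>y'\<in>UNIV. T $ y' $ j * indicator (B \<times> {y'}) (x, y)) = T $ y $ j * indicator B x" for x y
    by (simp add: indicator_def if_distrib cong: if_cong)
  define f where "f = (\<lambda>w. ln 2 - c * (\<Sum>y'\<in>UNIV. T $ y' $ j * indicator (B \<times> {y'}) w))"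
  have pw: "- (\<Sum>i\<in>UNIV. T $ snd w $ i * ln ((1 + s * indicator (B \<times> {j}) (fst w, i)) / 2)) = f w" for w
  proof -
    obtain x y where w: "w = (x, y)" by (cases w)
    have "(\<Sum>i\<in>UNIV. T $ y $ i * ((if i = j then c * indicator B x else 0) - ln 2))
        = (\<Sum>i\<in>UNIV. T $ y $ i * (if i = j then c * indicator B x else 0)) - ln 2 * (\<Sum>i\<in>UNIV. T $ y $ i)"
      by (simp add: right_diff_distrib sum_subtractf sum_distrib_left mult.commute)
    also have "\<dots> = T $ y $ j * (c * indicator B x) - ln 2" using T(2) by (simp only: d1)
    finally show ?thesis unfolding f_def w using d2[of x y] by (simp add: l)
  qed
  have meas: "B \<times> {y} \<in> sets M" for y using sets_B[OF B] M(2) by simp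
  interpret prob_space M by fact
  have ii: "integrable M (indicator (B \<times> {y}) :: _ \<Rightarrow> real)" for y
    using meas[of y] by (simp add: integrable_indicator_iff emeasure_eq_measure)
  have i2: "integrable M (\<lambda>w. (\<Sum>y'\<in>UNIV. T $ y' $ j * indicator (B \<times> {y'}) w))"
    using ii by (intro Bochner_Integration.integrable_sum[where I=UNIV and f="\<lambda>y' w. T $ y' $ j * indicator (B \<times> {y'}) w"]) auto
  have int: "integrable M f" unfolding f_def
    using i2 by (intro Bochner_Integration.integrable_diff Bochner_Integration.integrable_mult_right) auto
  have fnn: "0 \<le> f w" for w
  proof -
    define g where "g = T $ snd w $ j * indicator B (fst w)"
    have g: "0 \<le> g" "g \<le> 1" using T(1) unfolding g_def by (auto simp: indicator_def)
    have "c * g \<le> ln 2"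
    proof (cases "c \<le> 0")
      case True
      then have "c * g \<le> 0" using g by (simp add: mult_nonpos_nonneg)
      then show ?thesis using ln_gt_zero[of 2] by linarith
    next
      case False
      then have "c * g \<le> c * 1" using g by (intro mult_left_mono) auto
      then show ?thesis using c by linarith
    qed
    moreover have "f w = ln 2 - c * g" unfolding f_def g_def using d2[of "fst w" "snd w"] by simp
    ultimately show ?thesis by simp
  qed
  have sp: "space M = X \<times> UNIV"
    using sets_eq_imp_space_eq[OF M(2)] unfolding joint_space_def by (simp add: space_pair_measure space_restrict_space)
  have BX: "B \<subseteq> X" using sets.sets_into_space[OF B] by (simp add: space_restrict_space)
  have "integral\<^sup>L M f = ln 2 - c * (\<Sum>y\<in>UNIV. T $ y $ j * measure M (B \<times> {y}))"
  proof -
    have "B \<times> {y} \<inter> space M = B \<times> {y}" for y using sp BX by auto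
    then have ib: "integral\<^sup>L M (\<lambda>w. T $ y $ j * indicator (B \<times> {y}) w) = T $ y $ j * measure M (B \<times> {y})" for y
      using ii[of y] by (simp only: Bochner_Integration.integral_mult_right Bochner_Integration.integral_indicator)
    have "integral\<^sup>L M (\<lambda>w. (\<Sum>y'\<in>UNIV. T $ y' $ j * indicator (B \<times> {y'}) w))
        = (\<Sum>y\<in>UNIV. T $ y $ j * measure M (B \<times> {y}))"
      using ii by (subst Bochner_Integration.integral_sum) (auto simp only: ib)
    moreover have "integral\<^sup>L M f = integral\<^sup>L M (\<lambda>_. ln 2) - integral\<^sup>L M (\<lambda>w. c * (\<Sum>y'\<in>UNIV. T $ y' $ j * indicator (B \<times> {y'}) w))"
      unfolding f_def using i2 by (intro Bochner_Integration.integral_diff) auto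
    moreover have "integral\<^sup>L M (\<lambda>w. c * (\<Sum>y'\<in>UNIV. T $ y' $ j * indicator (B \<times> {y'}) w)) = c * integral\<^sup>L M (\<lambda>w. (\<Sum>y'\<in>UNIV. T $ y' $ j * indicator (B \<times> {y'}) w))"
      using i2 by (rule Bochner_Integration.integral_mult_right)
    ultimately show ?thesis by (simp add: prob_space)
  qed
  moreover have "(\<integral>\<^sup>+ w. ennreal (f w) \<partial>M) = ennreal (integral\<^sup>L M f)"
    using int fnn by (intro nn_integral_eq_integral) auto
  moreover have "0 \<le> integral\<^sup>L M f" using fnn by (intro Bochner_Integration.integral_nonneg) auto
  ultimately show ?thesis unfolding pw c_def by simp
qed



lemma meas_eq:
  fixes P Q :: "((real^'d) \<times> 'c::finite) measure"
  assumes P: "prob_space P" "sets P = sets (joint_space X)"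
    and Q: "prob_space Q" "sets Q = sets (joint_space X)"
    and eq: "\<And>B y. B \<in> sets (restrict_space borel X) \<Longrightarrow> measure P (B \<times> {y}) = measure Q (B \<times> {y})"
  shows "P = Q"
proof -
  let ?R = "restrict_space borel X :: (real^'d) measure"
  let ?C = "count_space (UNIV :: 'c set)"
  let ?\<Omega> = "space ?R \<times> space ?C"
  let ?E = "{a \<times> b | a b. a \<in> sets ?R \<and> b \<in> sets ?C}"
  have e1: "emeasure M (a \<times> b) = (\<Sum>y\<in>b. ennreal (measure M (a \<times> {y})))"
    if M: "prob_space M" "sets M = sets (joint_space X)" and a: "a \<in> sets ?R" for M :: "((real^'d) \<times> 'c) measure" and a b
  proof -
    have "(\<lambda>y. a \<times> {y}) ` b \<subseteq> sets M" using sets_B[OF a] M(2) by auto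
    moreover have "disjoint_family_on (\<lambda>y. a \<times> {y}) b" by (auto simp: disjoint_family_on_def)
    ultimately have "(\<Sum>y\<in>b. emeasure M (a \<times> {y})) = emeasure M (\<Union>y\<in>b. a \<times> {y})"
      by (intro sum_emeasure) (auto intro: finite_subset[OF subset_UNIV finite])
    also have "(\<Union>y\<in>b. a \<times> {y}) = a \<times> b" by auto
    finally show ?thesis using finite_measure.emeasure_eq_measure[OF prob_space.axioms(1)[OF M(1)]] by simp
  qed
  show ?thesis
  proof (rule measure_eqI_generator_eq[where E = ?E and \<Omega> = ?\<Omega> and A = "\<lambda>_. ?\<Omega>"])
    show "Int_stable ?E" by (rule Int_stable_pair_measure_generator)
    show "?E \<subseteq> Pow ?\<Omega>" by (rule pair_measure_closed)
    show "emeasure P Y = emeasure Q Y" if "Y \<in> ?E" for Y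
      using that e1[OF P] e1[OF Q] eq by auto
    show "sets P = sigma_sets ?\<Omega> ?E" using P(2) unfolding joint_space_def by (simp add: sets_pair_measure)
    show "sets Q = sigma_sets ?\<Omega> ?E" using Q(2) unfolding joint_space_def by (simp add: sets_pair_measure)
    show "range (\<lambda>_. ?\<Omega>) \<subseteq> ?E" by auto
    show "(\<Union>i. ?\<Omega>) = ?\<Omega>" by simp
    show "emeasure P ?\<Omega> \<noteq> \<infinity>" for i::nat using finite_measure.emeasure_eq_measure[OF prob_space.axioms(1)[OF P(1)]] by simp
  qed
qed

lemma choose_s1:
  fixes p q :: real assumes "0 \<le> q" "q < p"
  shows "\<exists>s. -1 < s \<and> s < 1 \<and> 0 < ln (1 + s) * p + ln (1 - s) * q"
proof -
  define s where "s = (p - q) / (2 * (p + q))"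
  have s0: "0 < s" unfolding s_def using assms by auto
  have s1: "s \<le> 1/2" unfolding s_def using assms by (auto simp: field_simps)
  have l1: "s / (1 + s) \<le> ln (1 + s)"
  proof -
    have "ln (1 / (1 + s)) \<le> 1 / (1 + s) - 1" using s0 by (intro ln_le_minus_one) auto
    then show ?thesis using s0 by (simp add: ln_div field_simps)
  qed
  have l2: "- s / (1 - s) \<le> ln (1 - s)"
  proof -
    have "ln (1 / (1 - s)) \<le> 1 / (1 - s) - 1" using s0 s1 by (intro ln_le_minus_one) auto
    then show ?thesis using s0 s1 by (simp add: ln_div field_simps)
  qed
  have "s / (1 + s) * p + (- s / (1 - s)) * q \<le> ln (1 + s) * p + ln (1 - s) * q"
    using assms l1 l2 by (intro add_mono mult_right_mono) auto
  moreover have "s / (1 + s) * p + (- s / (1 - s)) * q = s * ((p - q) - s * (p + q)) / ((1 + s) * (1 - s))"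
    using s0 s1 by (simp add: field_simps)
  moreover have "(p - q) - s * (p + q) = (p - q) / 2" unfolding s_def using assms by (simp add: field_simps)
  moreover have "0 < s * ((p - q) / 2) / ((1 + s) * (1 - s))" using s0 s1 assms by simp
  ultimately show ?thesis using s0 s1 by (intro exI[of _ s]) auto
qed

lemma choose_s:
  fixes p q :: real assumes "0 \<le> p" "0 \<le> q" "p \<noteq> q"
  shows "\<exists>s. -1 < s \<and> s < 1 \<and> 0 < ln (1 + s) * p + ln (1 - s) * q"
proof (cases "q < p")
  case True then show ?thesis using choose_s1 assms by blast
next
  case False
  then have "p < q" using assms by auto
  then obtain s where "-1 < s" "s < 1" "0 < ln (1 + s) * q + ln (1 - s) * p"
    using choose_s1 assms by blast
  then show ?thesis by (intro exI[of _ "-s"]) auto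
qed



theorem theorem2:
  fixes X :: "(real^'d) set" and T :: "real^'c^'c" and P :: "((real^'d) \<times> 'c) measure"
    and Z :: "'z measure" and py :: "'c pmf" and G :: "'z \<Rightarrow> 'c \<Rightarrow> real^'d"
  assumes "prob_space P" and "sets P = sets (joint_space X)"
    and "\<forall>i j. 0 \<le> T $ i $ j \<and> T $ i $ j \<le> 1"
    and "\<forall>i. (\<Sum>j\<in>UNIV. T $ i $ j) = 1"
    and "invertible T"
    and "prob_space Z"
    and "(\<lambda>(z, y). G z y) \<in> Z \<Otimes>\<^sub>M count_space UNIV \<rightarrow>\<^sub>M restrict_space borel X"
  shows "rcgan_optimal X T P Z py G \<longleftrightarrow> gen_dist X Z py G = P"
proof -
  define Qg where "Qg = gen_dist X Z py G"
  have mapm: "(\<lambda>u. (G (fst u) (snd u), snd u)) \<in> Z \<Otimes>\<^sub>M measure_pmf py \<rightarrow>\<^sub>M joint_space X"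
  proof -
    have "(\<lambda>(z, y). G z y) \<in> Z \<Otimes>\<^sub>M measure_pmf py \<rightarrow>\<^sub>M restrict_space borel X"
      using assms(7) by (subst measurable_cong_sets[OF sets_pair_measure_cong[OF refl sets_measure_pmf_count_space] refl])
    then have g1: "(\<lambda>u. G (fst u) (snd u)) \<in> Z \<Otimes>\<^sub>M measure_pmf py \<rightarrow>\<^sub>M restrict_space borel X"
      by (simp add: case_prod_beta')
    have g2: "snd \<in> Z \<Otimes>\<^sub>M measure_pmf py \<rightarrow>\<^sub>M count_space UNIV"
      by (subst measurable_cong_sets[OF sets_pair_measure_cong[OF refl sets_measure_pmf_count_space] refl]) measurable
    show ?thesis unfolding joint_space_def by (rule measurable_Pair[OF g1 g2])
  qed
  have map_eq: "(\<lambda>(z, y). (G z y, y)) = (\<lambda>u. (G (fst u) (snd u), snd u))" by auto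
  have pZ: "prob_space (Z \<Otimes>\<^sub>M measure_pmf py)"
    using assms(6) by (intro prob_space_pair) (auto simp: prob_space_measure_pmf)
  have Qp: "prob_space Qg" unfolding Qg_def gen_dist_def map_eq
    by (rule prob_space.prob_space_distr[OF pZ mapm])
  have Qs: "sets Qg = sets (joint_space X)" unfolding Qg_def gen_dist_def by simp
  have fake_eq: "fake_term_gen T Z py G D = fake_term_dist T Qg D" if D: "D \<in> discs X" for D
  proof -
    have Dm: "D \<in> borel_measurable (joint_space X)" using D unfolding discs_def by auto
    have fm: "(\<lambda>w. ennreal (- (\<Sum>j\<in>UNIV. T $ snd w $ j * (\<lambda>d. ln (1 - d)) (D (fst w, j))))) \<in> borel_measurable (joint_space X)"
      by (rule integrand_meas[OF Dm refl]) measurable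
    show ?thesis
    proof -
      have fm': "(\<lambda>w. ennreal (- (\<Sum>j\<in>UNIV. T $ snd w $ j * (\<lambda>d. ln (1 - d)) (D (fst w, j)))))
          \<in> borel_measurable (distr (Z \<Otimes>\<^sub>M measure_pmf py) (joint_space X) (\<lambda>u. (G (fst u) (snd u), snd u)))"
        using fm by (subst measurable_cong_sets[where M'="joint_space X" and N'=borel]) auto
      show ?thesis unfolding fake_term_gen_def fake_term_dist_def Qg_def gen_dist_def map_eq
        using nn_integral_distr[OF mapm fm'] by simp
    qed
  qed
  have gv: "gen_value X T P Z py G = dist_value X T P Qg"
    unfolding gen_value_def dist_value_def L_rcGAN_def L_dist_def using fake_eq by (intro SUP_cong) auto
  have lowQ: "ereal (- (2 * ln 2)) \<le> dist_value X T P Q" if "Q \<in> joint_dists X" for Q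
    using that unfolding dist_value_def joint_dists_def
    by (intro SUP_upper2[OF half_disc]) (simp add: L_half[OF assms(1) _ assms(4)])
  have upP: "dist_value X T P P \<le> ereal (- (2 * ln 2))" unfolding dist_value_def
    by (intro SUP_least L_upper[OF assms(1,2,3,4)])
  have Pin: "P \<in> joint_dists X" using assms(1,2) by (simp add: joint_dists_def)
  show ?thesis
  proof
    assume opt: "rcgan_optimal X T P Z py G"
    show "gen_dist X Z py G = P"
    proof (rule ccontr)
      assume ne: "gen_dist X Z py G \<noteq> P"
      then have "Qg \<noteq> P" by (simp add: Qg_def)
      have "\<exists>B y. B \<in> sets (restrict_space borel X) \<and> measure P (B \<times> {y}) \<noteq> measure Qg (B \<times> {y})"
      proof (rule ccontr)
        assume "\<not> ?thesis"
        then have "P = Qg" by (intro meas_eq[OF assms(1,2) Qp Qs]) auto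
        with \<open>Qg \<noteq> P\<close> show False by simp
      qed
      then obtain B y where B: "B \<in> sets (restrict_space borel X)" and neq: "measure P (B \<times> {y}) \<noteq> measure Qg (B \<times> {y})"
        by blast
      define v where "v = (\<chi> y. measure P (B \<times> {y}))"
      define w where "w = (\<chi> y. measure Qg (B \<times> {y}))"
      have "v \<noteq> w"
      proof
        assume "v = w"
        then have "v $ y = w $ y" by simp
        then show False using neq unfolding v_def w_def by simp
      qed
      then have "v v* T \<noteq> w v* T" using inv_vec[OF assms(5)] by blast
      then obtain j where j: "(v v* T) $ j \<noteq> (w v* T) $ j" by (auto simp: vec_eq_iff)
      define p where "p = (\<Sum>y\<in>UNIV. T $ y $ j * measure P (B \<times> {y}))"
      define q where "q = (\<Sum>y\<in>UNIV. T $ y $ j * measure Qg (B \<times> {y}))"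
      have pq: "p \<noteq> q" using j unfolding p_def q_def v_def w_def vector_matrix_mult_def by (simp add: mult.commute)
      have p0: "0 \<le> p" "0 \<le> q" using assms(3) by (auto simp: p_def q_def intro!: sum_nonneg)
      obtain s where s: "-1 < s" "s < 1" "0 < ln (1 + s) * p + ln (1 - s) * q"
        using choose_s[OF p0 pq] by blast
      define D where "D = (\<lambda>w. (1 + s * indicator (B \<times> {j}) w) / 2 :: real)"
      have Dm: "D \<in> borel_measurable (joint_space X)"
        unfolding D_def using sets_B[OF B, of j] by measurable
      have Dd: "D \<in> discs X"
        unfolding discs_def using Dm s by (auto simp: D_def indicator_def)
      have LD: "L_dist T P Qg D = ereal (- (2 * ln 2) + (ln (1 + s) * p + ln (1 - s) * q))"
      proof -
        have r: "real_term T P D = - ereal (ln 2 - ln (1 + s) * p)"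
          unfolding real_term_def D_def p_def using term_A[OF assms(1,2) assms(3,4) B s(1,2), of j] by simp
        have e: "\<And>v. 1 - (1 + s * v) / 2 = (1 + (- s) * v) / 2" by (simp add: field_simps)
        have f: "fake_term_dist T Qg D = - ereal (ln 2 - ln (1 - s) * q)"
          unfolding fake_term_dist_def D_def q_def e using term_A[OF Qp Qs assms(3,4) B, of "- s" j] s by simp
        show ?thesis unfolding L_dist_def r f by simp
      qed
      have "ereal (- (2 * ln 2)) < L_dist T P Qg D" using LD s(3) by simp
      also have "\<dots> \<le> dist_value X T P Qg" unfolding dist_value_def using Dd by (rule SUP_upper)
      also have "\<dots> = gen_value X T P Z py G" using gv by simp
      also have "\<dots> \<le> dist_value X T P P" using opt Pin unfolding rcgan_optimal_def by blast
      also have "\<dots> \<le> ereal (- (2 * ln 2))" by (rule upP)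
      finally show False by simp
    qed
  next
    assume eq: "gen_dist X Z py G = P"
    show "rcgan_optimal X T P Z py G" unfolding rcgan_optimal_def
    proof
      fix Q :: "((real^'d) \<times> 'c) measure" assume Q: "Q \<in> joint_dists X"
      have "gen_value X T P Z py G = dist_value X T P P" using gv eq Qg_def by simp
      also have "\<dots> \<le> ereal (- (2 * ln 2))" by (rule upP)
      also have "\<dots> \<le> dist_value X T P Q" by (rule lowQ[OF Q])
      finally show "gen_value X T P Z py G \<le> dist_value X T P Q" .
    qed
  qed
qed

end
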